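(* Let $G$ be a graph with vertex set $[n]$. Distinct $G$-reduced noncrossing trees on $[n]$ have distinct signatures.
   Context: A graph on $[n]$ is noncrossing if it has no two edges $\overline{ac},\overline{bd}$ with $a<b<c<d$. A noncrossing tree $T$ on $[n]$ is $G$-reduced if $T\subset G$ and there do not exist $1\le i_1<i_2<\dots<i_m\le n$ such that $\overline{i_1i_m}\in T$, $\overline{i_{j-1}i_j}\in T$ for all $1<j<m$, $\overline{i_{m-1}i_m}\in G$, and $T\cup\overline{i_{m-1}i_m}$ is noncrossing. The signature of a noncrossing tree $T$ on $[n]$ is the sequence $s(T)=(s_1,\dots,s_n)$ defined by $s_1=1$ and, for $i>1$: $s_i=s_j$ where $j<i$ is the minimum vertex with $\overline{ji}\in T$, if such $j$ exists; otherwise $s_i=s_{i-1}+1$. *)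

theory Defs
  imports Main
begin

text \<open>A graph on [n] = {1..n} is a set of edges; an edge between a and b with a < b
  is represented by the ordered pair (a, b).\<close>

definition edges_on :: "nat \<Rightarrow> (nat \<times> nat) set" where
  "edges_on n = {(a, b). 1 \<le> a \<and> a < b \<and> b \<le> n}"

definition graph_on :: "nat \<Rightarrow> (nat \<times> nat) set \<Rightarrow> bool" where
  "graph_on n G \<longleftrightarrow> G \<subseteq> edges_on n"

definition noncrossing :: "(nat \<times> nat) set \<Rightarrow> bool" where
  "noncrossing E \<longleftrightarrow>
     \<not> (\<exists>a b c d. (a, c) \<in> E \<and> (b, d) \<in> E \<and> a < b \<and> b < c \<and> c < d)"

definition connected_on :: "nat \<Rightarrow> (nat \<times> nat) set \<Rightarrow> bool" where
  "connected_on n E \<longleftrightarrow>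
     (\<forall>i \<in> {1..n}. \<forall>j \<in> {1..n}. (i, j) \<in> (E \<union> E\<inverse>)\<^sup>*)"

definition acyclic_graph :: "(nat \<times> nat) set \<Rightarrow> bool" where
  "acyclic_graph E \<longleftrightarrow>
     (\<forall>e \<in> E. e \<notin> ((E - {e}) \<union> (E - {e})\<inverse>)\<^sup>*)"

definition tree_on :: "nat \<Rightarrow> (nat \<times> nat) set \<Rightarrow> bool" where
  "tree_on n T \<longleftrightarrow> graph_on n T \<and> connected_on n T \<and> acyclic_graph T"

definition nc_tree :: "nat \<Rightarrow> (nat \<times> nat) set \<Rightarrow> bool" where
  "nc_tree n T \<longleftrightarrow> tree_on n T \<and> noncrossing T"

text \<open>G-reduced: T \<subseteq> G and there is no increasing sequence i_1 < ... < i_m (m \<ge> 3)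
  in [n] with i_1 i_m \<in> T, i_(j-1) i_j \<in> T for 1 < j < m, i_(m-1) i_m \<in> G and
  T \<union> {i_(m-1) i_m} noncrossing.  The list xs = [i_1, ..., i_m] is 0-indexed.\<close>
definition G_reduced :: "nat \<Rightarrow> (nat \<times> nat) set \<Rightarrow> (nat \<times> nat) set \<Rightarrow> bool" where
  "G_reduced n G T \<longleftrightarrow> T \<subseteq> G \<and>
     \<not> (\<exists>xs. 3 \<le> length xs \<and> sorted_wrt (<) xs \<and> set xs \<subseteq> {1..n} \<and>
           (hd xs, last xs) \<in> T \<and>
           (\<forall>j. 1 \<le> j \<and> j < length xs - 1 \<longrightarrow> (xs ! (j - 1), xs ! j) \<in> T) \<and>
           (xs ! (length xs - 2), last xs) \<in> G \<and>
           noncrossing (insert (xs ! (length xs - 2), last xs) T))"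

fun sig_list :: "(nat \<times> nat) set \<Rightarrow> nat \<Rightarrow> nat list" where
  "sig_list T 0 = []"
| "sig_list T (Suc k) =
     (let s = sig_list T k; i = Suc k in
      s @ [if i = 1 then 1
           else if (\<exists>j. 1 \<le> j \<and> j < i \<and> (j, i) \<in> T)
           then s ! ((LEAST j. 1 \<le> j \<and> j < i \<and> (j, i) \<in> T) - 1)
           else last s + 1])"

definition signature :: "nat \<Rightarrow> (nat \<times> nat) set \<Rightarrow> nat list" where
  "signature n T = sig_list T n"

end

theory Submission imports Defs begin

lemma ncD: "noncrossing E \<Longrightarrow> (a,c)\<in>E \<Longrightarrow> (b,d)\<in>E \<Longrightarrow> a<b \<Longrightarrow> b<c \<Longrightarrow> c<d \<Longrightarrow> False"
  unfolding noncrossing_def by blast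

lemma treeE: assumes "nc_tree n T" "(p,q)\<in>T" shows "1 \<le> p" "p<q" "q \<le> n"
  using assms unfolding nc_tree_def tree_on_def graph_on_def edges_on_def by auto

lemma sig_len[simp]: "length (sig_list T k) = k"
  by (induction k) (auto simp: Let_def)

lemma sig_prefix: "k \<le> m \<Longrightarrow> take k (sig_list T m) = sig_list T k"
proof (induction m)
  case 0 thus ?case by simp
next
  case (Suc m)
  show ?case
  proof (cases "k = Suc m")
    case True thus ?thesis by (simp add: Let_def)
  next
    case False
    with Suc have "k \<le> m" by simp
    thus ?thesis using Suc.IH by (simp add: Let_def)
  qed
qed

lemma sig_nth: assumes "v \<le> m" "1 \<le> v" shows "sig_list T m ! (v-1) = sig_list T v ! (v-1)"
proof -
  have "sig_list T v ! (v-1) = take v (sig_list T m) ! (v-1)" using sig_prefix[OF assms(1)] by simp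
  also have "\<dots> = sig_list T m ! (v-1)" using assms by simp
  finally show ?thesis by simp
qed

definition cuts :: "(nat\<times>nat) set \<Rightarrow> nat \<Rightarrow> nat set" where
 "cuts T v = {g. 1 \<le> g \<and> g < v \<and> \<not>(\<exists>p q. (p,q) \<in> T \<and> p \<le> g \<and> g < q \<and> q \<le> v)}"

lemma finite_cuts[simp]: "finite (cuts T v)"
  by (rule finite_subset[of _ "{..<v}"]) (auto simp: cuts_def)

lemma sig_cuts:
  assumes nc: "noncrossing T" and E: "\<And>p q. (p,q)\<in>T \<Longrightarrow> 1 \<le> p \<and> p < q"
  shows "1 \<le> v \<Longrightarrow> sig_list T v ! (v-1) = 1 + card (cuts T v)"
proof (induction v rule: less_induct)
  case (less v)
  show ?case
  proof (cases "v = 1")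
    case True
    have "cuts T 1 = {}" by (auto simp: cuts_def)
    thus ?thesis using True by simp
  next
    case False
    then obtain k where v: "v = Suc k" and k1: "1 \<le> k" using less.prems by (cases v) auto
    define s where "s = sig_list T k"
    have sv: "sig_list T v ! (v-1) = (if \<exists>j. 1 \<le> j \<and> j < v \<and> (j,v)\<in>T then s ! ((LEAST j. 1 \<le> j \<and> j < v \<and> (j,v)\<in>T) - 1) else last s + 1)"
    proof -
      have "sig_list T v = s @ [if \<exists>j. 1 \<le> j \<and> j < v \<and> (j,v)\<in>T then s ! ((LEAST j. 1 \<le> j \<and> j < v \<and> (j,v)\<in>T) - 1) else last s + 1]"
        using v k1 unfolding s_def by (simp only: sig_list.simps Let_def) simp
      thus ?thesis using v by (simp add: nth_append s_def)
    qed
    show ?thesis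
    proof (cases "\<exists>j. 1 \<le> j \<and> j < v \<and> (j,v)\<in>T")
      case False
      have ne: "sig_list T k \<noteq> []" using k1 by (metis sig_len list.size(3) not_one_le_zero)
      have ls: "last s = 1 + card (cuts T k)"
        using less.IH[of k] v k1 last_conv_nth[OF ne] by (simp add: s_def)
      have "cuts T v = insert k (cuts T k)"
      proof (rule set_eqI, rule iffI)
        fix g assume "g \<in> cuts T v"
        thus "g \<in> insert k (cuts T k)" unfolding cuts_def using v by force
      next
        fix g assume g: "g \<in> insert k (cuts T k)"
        show "g \<in> cuts T v"
        proof (cases "g = k")
          case True
          show ?thesis unfolding cuts_def
          proof safe
            show "1 \<le> g" "g < v" using True k1 v by auto
          next
            fix p q assume pq: "(p,q)\<in>T" "p \<le> g" "g < q" "q \<le> v"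
            hence "q = v" using True v by simp
            hence "(p, v) \<in> T" "1 \<le> p" "p < v" using pq E[OF pq(1)] by auto
            thus False using False by blast
          qed
        next
          case gk: False
          with g have g': "g \<in> cuts T k" by simp
          show ?thesis unfolding cuts_def
          proof (safe)
            show "1 \<le> g" "g < v" using g' v by (auto simp: cuts_def)
          next
            fix p q assume pq: "(p,q)\<in>T" "p \<le> g" "g < q" "q \<le> v"
            show False
            proof (cases "q = v")
              case True thus False using False pq E[OF pq(1)] g' v by (auto simp: cuts_def)
            next
              case False2: False
              hence "q \<le> k" using pq v by simp
              thus False using pq g' unfolding cuts_def by blast
            qed
          qed
        qed
      qed
      moreover have "k \<notin> cuts T k" by (simp add: cuts_def)
      moreover have "sig_list T v ! (v-1) = last s + 1" by (simp only: sv if_not_P[OF False])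
      ultimately show ?thesis using ls by simp
    next
      case True
      define u where "u = (LEAST j. 1 \<le> j \<and> j < v \<and> (j,v)\<in>T)"
      have u: "1 \<le> u" "u < v" "(u,v) \<in> T" using LeastI_ex[OF True] unfolding u_def by auto
      have umin: "\<And>j. 1 \<le> j \<Longrightarrow> j < v \<Longrightarrow> (j,v)\<in>T \<Longrightarrow> u \<le> j" unfolding u_def by (simp add: Least_le)
      have "s ! (u-1) = sig_list T u ! (u-1)" unfolding s_def using u v by (intro sig_nth) auto
      also have "\<dots> = 1 + card (cuts T u)" using less.IH[of u] u by simp
      finally have su: "s ! (u-1) = 1 + card (cuts T u)" .
      have "cuts T v = cuts T u"
      proof (rule set_eqI, rule iffI)
        fix g assume g: "g \<in> cuts T v"
        have "g < u"
        proof (rule ccontr)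
          assume "\<not> g < u"
          hence "u \<le> g" by simp
          thus False using g u unfolding cuts_def by blast
        qed
        show "g \<in> cuts T u" unfolding cuts_def
        proof safe
          show "1 \<le> g" "g < u" using g \<open>g < u\<close> by (auto simp: cuts_def)
        next
          fix p q assume pq: "(p,q)\<in>T" "p \<le> g" "g < q" "q \<le> u"
          hence "q \<le> v" using u by simp
          thus False using g pq unfolding cuts_def by blast
        qed
      next
        fix g assume g: "g \<in> cuts T u"
        show "g \<in> cuts T v" unfolding cuts_def
        proof safe
          show "1 \<le> g" "g < v" using g u by (auto simp: cuts_def)
        next
          fix p q assume pq: "(p,q)\<in>T" "p \<le> g" "g < q" "q \<le> v"
          have gu: "g < u" using g by (simp add: cuts_def)
          show False
          proof (cases "q \<le> u")
            case True thus False using g pq by (auto simp: cuts_def)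
          next
            case False
            show False
            proof (cases "q = v")
              case True
              thus False using umin[of p] E[OF pq(1)] pq gu by auto
            next
              case False2: False
              show False using ncD[OF nc pq(1) u(3), of] pq gu False False2 by auto
            qed
          qed
        qed
      qed
      moreover have "sig_list T v ! (v-1) = s ! (u - 1)" unfolding u_def by (simp only: sv if_P[OF True])
      ultimately show ?thesis using su by simp
    qed
  qed
qed


inductive inc :: "(nat\<times>nat) set \<Rightarrow> nat \<Rightarrow> nat \<Rightarrow> bool" for T where
  inc_refl: "inc T a a"
| inc_step: "(a,u) \<in> T \<Longrightarrow> a < u \<Longrightarrow> inc T u b \<Longrightarrow> inc T a b"

lemma inc_le: "inc T a b \<Longrightarrow> a \<le> b"
  by (induction rule: inc.induct) auto

lemma inc_straddle: "inc T a b \<Longrightarrow> a < q \<Longrightarrow> q < b \<Longrightarrow>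
   inc T q b \<or> (\<exists>u w. (u,w)\<in>T \<and> u<q \<and> q<w \<and> a \<le> u \<and> w \<le> b)"
proof (induction rule: inc.induct)
  case (inc_refl a) thus ?case by simp
next
  case (inc_step a u b)
  show ?case
  proof (cases "q < u")
    case True thus ?thesis using inc_step inc_le[OF inc_step(3)] by blast
  next
    case False
    show ?thesis
    proof (cases "q = u")
      case True thus ?thesis using inc_step by blast
    next
      case False2: False
      hence "u < q" using False by simp
      from inc_step.IH[OF this inc_step.prems(2)] show ?thesis
      proof
        assume "\<exists>ua w. (ua, w) \<in> T \<and> ua < q \<and> q < w \<and> u \<le> ua \<and> w \<le> b"
        then obtain ua w where "(ua, w) \<in> T" "ua < q" "q < w" "u \<le> ua" "w \<le> b" by blast
        moreover have "a \<le> ua" using inc_step(2) \<open>u \<le> ua\<close> by simp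
        ultimately show ?thesis by blast
      qed simp
    qed
  qed
qed

lemma inc_list: "inc T a b \<Longrightarrow> \<exists>xs. xs \<noteq> [] \<and> hd xs = a \<and> last xs = b \<and> sorted_wrt (<) xs
   \<and> set xs \<subseteq> {a..b} \<and> (\<forall>j. 1 \<le> j \<and> j < length xs \<longrightarrow> (xs!(j-1), xs!j) \<in> T)"
proof (induction rule: inc.induct)
  case (inc_refl a)
  show ?case by (rule exI[of _ "[a]"]) auto
next
  case (inc_step a u b)
  then obtain xs where xs: "xs \<noteq> []" "hd xs = u" "last xs = b" "sorted_wrt (<) xs"
     "set xs \<subseteq> {u..b}" "\<forall>j. 1 \<le> j \<and> j < length xs \<longrightarrow> (xs!(j-1), xs!j) \<in> T" by blast
  have ub: "u \<le> b" using inc_le[OF inc_step(3)] .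
  show ?case
  proof (rule exI[of _ "a # xs"], intro conjI allI impI)
    show "sorted_wrt (<) (a # xs)" using xs(4,5) inc_step(2) by auto
    show "set (a # xs) \<subseteq> {a..b}" using xs(5) inc_step(2) ub by auto
    show "last (a # xs) = b" using xs by simp
  next
    fix j assume j: "1 \<le> j \<and> j < length (a # xs)"
    show "((a # xs) ! (j - 1), (a # xs) ! j) \<in> T"
    proof (cases "j = 1")
      case True
      have "xs ! 0 = u" using xs(1,2) by (simp add: hd_conv_nth)
      thus ?thesis using True inc_step(1) by simp
    next
      case False
      then obtain i where i: "j = Suc (Suc i)" using j by (metis One_nat_def Suc_le_D Suc_le_lessD less_one nat.exhaust)
      have "(xs ! i, xs ! Suc i) \<in> T" using xs(6) j i by (metis One_nat_def diff_Suc_1 le_add1 length_Cons plus_1_eq_Suc Suc_less_SucD)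
      thus ?thesis using i by simp
    qed
  qed simp_all
qed

lemma rt_sym: "(a,b) \<in> (E \<union> E\<inverse>)\<^sup>* \<Longrightarrow> (b,a) \<in> (E \<union> E\<inverse>)\<^sup>*"
proof (induction rule: rtrancl_induct)
  case base thus ?case by simp
next
  case (step y z)
  hence "(z,y) \<in> E \<union> E\<inverse>" by auto
  thus ?case using step(3) by (rule converse_rtrancl_into_rtrancl)
qed

lemma rt_straddle:
  fixes E :: "(nat \<times> nat) set"
  assumes E: "\<And>p q. (p,q)\<in>E \<Longrightarrow> p < q"
  shows "(a,b) \<in> (E \<union> E\<inverse>)\<^sup>* \<Longrightarrow> a < q \<longrightarrow> q < b \<longrightarrow>
    (a,q) \<in> (E \<union> E\<inverse>)\<^sup>* \<or> (\<exists>u w. (u,w)\<in>E \<and> u<q \<and> q<w \<and> (a,u) \<in> (E \<union> E\<inverse>)\<^sup>*)"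
proof (induction rule: rtrancl_induct)
  case base thus ?case by auto
next
  case (step y z)
  show ?case
  proof (intro impI)
    assume q: "a < q" "q < z"
    show "(a,q) \<in> (E \<union> E\<inverse>)\<^sup>* \<or> (\<exists>u w. (u,w)\<in>E \<and> u<q \<and> q<w \<and> (a,u) \<in> (E \<union> E\<inverse>)\<^sup>*)"
    proof (cases "y < q")
      case True
      from step(2) show ?thesis
      proof
        assume "(y,z) \<in> E" thus ?thesis using True q step(1) by blast
      next
        assume "(y,z) \<in> E\<inverse>" hence "z < y" using E by auto
        thus ?thesis using True q by simp
      qed
    next
      case False
      thus ?thesis using step q by (metis linorder_neqE_nat)
    qed
  qed
qed

lemma rt_range:
  fixes E :: "(nat \<times> nat) set"
  assumes E: "\<And>p q. (p,q)\<in>E \<Longrightarrow> lo \<le> p \<and> q \<le> hi \<and> p < q"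
  shows "(a,b) \<in> (E \<union> E\<inverse>)\<^sup>* \<Longrightarrow> lo \<le> a \<Longrightarrow> a \<le> hi \<Longrightarrow> lo \<le> b \<and> b \<le> hi"
proof (induction rule: rtrancl_induct)
  case base thus ?case by simp
next
  case (step y z)
  from step(2) have "(y,z)\<in>E \<or> (z,y)\<in>E" by auto
  thus ?case using step(3-5) E[of y z] E[of z y] by auto
qed

lemma cut_lemma:
  assumes "connected_on n T" "a \<in> A" "b \<notin> A" "a \<in> {1..n}" "b \<in> {1..n}"
  shows "\<exists>u w. (u,w)\<in>T \<and> ((u\<in>A \<and> w\<notin>A) \<or> (u\<notin>A \<and> w\<in>A))"
proof -
  have r: "(a,b) \<in> (T \<union> T\<inverse>)\<^sup>*" using assms unfolding connected_on_def by blast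
  have "\<And>y. (a,y) \<in> (T \<union> T\<inverse>)\<^sup>* \<Longrightarrow> y \<notin> A \<Longrightarrow> \<exists>u w. (u,w)\<in>T \<and> ((u\<in>A \<and> w\<notin>A) \<or> (u\<notin>A \<and> w\<in>A))"
  proof -
    fix y assume "(a,y) \<in> (T \<union> T\<inverse>)\<^sup>*" "y \<notin> A"
    thus "\<exists>u w. (u,w)\<in>T \<and> ((u\<in>A \<and> w\<notin>A) \<or> (u\<notin>A \<and> w\<in>A))"
    proof (induction rule: rtrancl_induct)
      case base thus ?case using assms(2) by simp
    next
      case (step y z)
      show ?case
      proof (cases "y \<in> A")
        case True thus ?thesis using step(2,4) by blast
      next
        case False thus ?thesis using step(3) by blast
      qed
    qed
  qed
  thus ?thesis using r assms(3) by blast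
qed

lemma cycle_lemma:
  assumes "acyclic_graph T" "(x,c)\<in>T" "(p,c)\<in>T" "p\<noteq>x" "(x,p) \<in> (E \<union> E\<inverse>)\<^sup>*" "E \<subseteq> T - {(x,c)}"
  shows False
proof -
  let ?F = "T - {(x,c)}"
  have "(E \<union> E\<inverse>)\<^sup>* \<subseteq> (?F \<union> ?F\<inverse>)\<^sup>*" using assms(6) by (intro rtrancl_mono) auto
  hence "(x,p) \<in> (?F \<union> ?F\<inverse>)\<^sup>*" using assms(5) by blast
  moreover have "(p,c) \<in> ?F \<union> ?F\<inverse>" using assms(3,4) by auto
  ultimately have "(x,c) \<in> (?F \<union> ?F\<inverse>)\<^sup>*" by (rule rtrancl_into_rtrancl)
  thus False using assms(1,2) unfolding acyclic_graph_def by blast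
qed


context
  fixes n :: nat and T1 T2 :: "(nat\<times>nat) set" and c x :: nat
  assumes t1: "nc_tree n T1" and t2: "nc_tree n T2"
    and agree: "\<And>p q. q < c \<Longrightarrow> (p,q) \<in> T1 \<longleftrightarrow> (p,q) \<in> T2"
    and xc2: "(x,c) \<in> T2" and xc1: "(x,c) \<notin> T1"
    and above: "\<And>y. x < y \<Longrightarrow> (y,c) \<in> T1 \<longleftrightarrow> (y,c) \<in> T2"
    and sigeq: "sig_list T1 c ! (c-1) = sig_list T2 c ! (c-1)"
begin

lemma nc1: "noncrossing T1" using t1 by (simp add: nc_tree_def)
lemma nc2: "noncrossing T2" using t2 by (simp add: nc_tree_def)
lemma xc: "1 \<le> x" "x < c" "c \<le> n" using treeE[OF t2 xc2] by auto
lemma conn1: "connected_on n T1" using t1 by (simp add: nc_tree_def tree_on_def)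
lemma acyc2: "acyclic_graph T2" using t2 by (simp add: nc_tree_def tree_on_def)

lemma step1: "\<exists>j. (j,c)\<in>T1 \<and> j<x"
proof (rule ccontr)
  assume noL: "\<not> (\<exists>j. (j,c)\<in>T1 \<and> j<x)"
  have L12: "(j,c) \<in> T1 \<Longrightarrow> (j,c) \<in> T2 \<and> x < j" for j
  proof -
    assume j: "(j,c) \<in> T1"
    hence "x \<le> j" using noL by auto
    moreover have "j \<noteq> x" using j xc1 by auto
    ultimately have "x < j" by simp
    thus ?thesis using above j by blast
  qed
  have sub: "cuts T2 c \<subseteq> cuts T1 c"
  proof
    fix g assume g: "g \<in> cuts T2 c"
    show "g \<in> cuts T1 c" unfolding cuts_def
    proof safe
      show "1 \<le> g" "g < c" using g by (auto simp: cuts_def)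
    next
      fix p q assume pq: "(p,q)\<in>T1" "p \<le> g" "g < q" "q \<le> c"
      have "(p,q) \<in> T2"
      proof (cases "q < c")
        case True thus ?thesis using agree pq by blast
      next
        case False hence "q = c" using pq by simp
        thus ?thesis using L12 pq by blast
      qed
      thus False using g pq unfolding cuts_def by blast
    qed
  qed
  have E1: "\<And>p q. (p,q)\<in>T1 \<Longrightarrow> 1 \<le> p \<and> p < q" using treeE[OF t1] by blast
  have E2: "\<And>p q. (p,q)\<in>T2 \<Longrightarrow> 1 \<le> p \<and> p < q" using treeE[OF t2] by blast
  have "1 + card (cuts T1 c) = 1 + card (cuts T2 c)"
    using sigeq sig_cuts[OF nc1 E1, of c] sig_cuts[OF nc2 E2, of c] xc by simp
  hence ceq: "cuts T2 c = cuts T1 c" using sub by (simp add: card_subset_eq)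
  define EB where "EB = {(p,q). (p,q)\<in>T1 \<and> x \<le> p \<and> q < c}"
  define B where "B = {v. (x,v) \<in> (EB \<union> EB\<inverse>)\<^sup>*}"
  have EBr: "\<And>p q. (p,q)\<in>EB \<Longrightarrow> x \<le> p \<and> q \<le> c - 1 \<and> p < q" unfolding EB_def using E1 by auto
  have Brange: "v \<in> B \<Longrightarrow> x \<le> v \<and> v \<le> c - 1" for v
    using rt_range[OF EBr, where a=x and b=v] xc unfolding B_def by auto
  have xB: "x \<in> B" unfolding B_def by simp
  have finB: "finite B" by (rule finite_subset[of _ "{x..c-1}"]) (use Brange in auto)
  define M where "M = Max B"
  have MB: "M \<in> B" unfolding M_def using finB xB by (intro Max_in) auto
  have Mmax: "v \<in> B \<Longrightarrow> v \<le> M" for v unfolding M_def using finB by simp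
  have xM: "x \<le> M" "M < c" using Mmax[OF xB] Brange[OF MB] xc by auto
  have Bclos: "u \<in> B \<Longrightarrow> (u,w) \<in> EB \<Longrightarrow> w \<in> B" for u w
    unfolding B_def by (auto intro: rtrancl_into_rtrancl)
  have strad: "x < y \<Longrightarrow> y < M \<Longrightarrow> y \<notin> B \<Longrightarrow> \<exists>u w. (u,w)\<in>T1 \<and> u < y \<and> y < w \<and> w \<le> M" for y
  proof -
    assume y: "x < y" "y < M" "y \<notin> B"
    have "(x,M) \<in> (EB \<union> EB\<inverse>)\<^sup>*" using MB unfolding B_def by simp
    from rt_straddle[of EB, OF _ this] EBr y
    obtain u w where uw: "(u,w)\<in>EB" "u<y" "y<w" "(x,u) \<in> (EB \<union> EB\<inverse>)\<^sup>*"
      unfolding B_def by blast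
    have "w \<in> B" using Bclos[of u w] uw unfolding B_def by simp
    thus ?thesis using uw Mmax unfolding EB_def by blast
  qed
  have "M \<in> cuts T1 c" unfolding cuts_def
  proof safe
    show "1 \<le> M" "M < c" using xM xc by auto
  next
    fix p q assume pq: "(p,q)\<in>T1" "p \<le> M" "M < q" "q \<le> c"
    show False
    proof (cases "q < c")
      case qc: True
      show False
      proof (cases "p \<in> B")
        case True
        hence "(p,q) \<in> EB" using Brange pq qc unfolding EB_def by auto
        hence "q \<in> B" using Bclos True by blast
        thus False using Mmax pq by fastforce
      next
        case False
        show False
        proof (cases "p < x")
          case True
          have pq2: "(p,q)\<in>T2" using agree qc pq by blast
          thus False using ncD[OF nc2 pq2 xc2] True pq xM qc by simp
        next
          case False2: False
          have "p \<noteq> x" "p \<noteq> M" using False xB MB by auto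
          hence "x < p" "p < M" using False2 pq by auto
          then obtain u w where "(u,w)\<in>T1" "u < p" "p < w" "w \<le> M" using strad False by blast
          thus False using ncD[OF nc1 \<open>(u,w)\<in>T1\<close> pq(1)] pq by simp
        qed
      qed
    next
      case False
      hence qc: "q = c" using pq by simp
      hence pc1: "(p,c)\<in>T1" using pq by simp
      from L12[OF pc1] have pc2: "(p,c) \<in> T2" and xp: "x < p" by auto
      show False
      proof (cases "p \<in> B")
        case True
        have "EB \<subseteq> T2 - {(x,c)}" unfolding EB_def using agree by auto
        moreover have "(x,p) \<in> (EB \<union> EB\<inverse>)\<^sup>*" using True unfolding B_def by simp
        moreover have "p \<noteq> x" using xp by simp
        ultimately show False using cycle_lemma[OF acyc2 xc2 pc2] by blast
      next
        case False
        have "p \<noteq> M" using False MB by auto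
        hence "p < M" using pq by simp
        then obtain u w where "(u,w)\<in>T1" "u < p" "p < w" "w \<le> M" using strad False xp by blast
        thus False using ncD[OF nc1 \<open>(u,w)\<in>T1\<close> pc1] xM by simp
      qed
    qed
  qed
  hence "M \<in> cuts T2 c" using ceq by simp
  thus False using xc2 xM unfolding cuts_def by auto
qed


lemma step2: "\<exists>v. inc T1 v x \<and> (v,c) \<in> T1"
proof (rule ccontr)
  assume noP: "\<not> (\<exists>v. inc T1 v x \<and> (v,c) \<in> T1)"
  obtain j0 where j0: "(j0,c)\<in>T1" "j0<x" using step1 by blast
  have E1: "\<And>p q. (p,q)\<in>T1 \<Longrightarrow> 1 \<le> p \<and> p < q" using treeE[OF t1] by blast
  define r where "r = (LEAST v. inc T1 v x)"
  have rx: "inc T1 r x" unfolding r_def by (rule LeastI[of _ x]) (rule inc_refl)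
  have rmin: "inc T1 v x \<Longrightarrow> r \<le> v" for v unfolding r_def by (rule Least_le)
  have rlex: "r \<le> x" using inc_le[OF rx] .
  have nolr: "(p,r) \<in> T1 \<Longrightarrow> False" for p
  proof -
    assume pr: "(p,r) \<in> T1"
    hence "p < r" using E1 by blast
    hence "inc T1 p x" using inc_step[OF pr _ rx] by simp
    thus False using rmin \<open>p < r\<close> by fastforce
  qed
  have noLr: "r \<le> u \<Longrightarrow> u < x \<Longrightarrow> (u,c) \<in> T1 \<Longrightarrow> False" for u
  proof -
    assume u: "r \<le> u" "u < x" "(u,c) \<in> T1"
    show False
    proof (cases "u = r")
      case True thus False using noP rx u by blast
    next
      case False
      hence "r < u" using u by simp
      from inc_straddle[OF rx this u(2)] show False
      proof
        assume "inc T1 u x" thus False using noP u by blast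
      next
        assume "\<exists>a b. (a,b)\<in>T1 \<and> a<u \<and> u<b \<and> r \<le> a \<and> b \<le> x"
        then obtain a b where ab: "(a,b)\<in>T1" "a<u" "u<b" "b \<le> x" by blast
        thus False using ncD[OF nc1 ab(1) u(3)] xc by simp
      qed
    qed
  qed
  have j0r: "j0 < r"
  proof (rule ccontr)
    assume "\<not> j0 < r" hence "r \<le> j0" by simp
    thus False using noLr[of j0] j0 by blast
  qed
  define EA where "EA = {(p,q). (p,q)\<in>T1 \<and> r \<le> p \<and> q < c}"
  define A where "A = {v. (r,v) \<in> (EA \<union> EA\<inverse>)\<^sup>*}"
  have EAr: "\<And>p q. (p,q)\<in>EA \<Longrightarrow> r \<le> p \<and> q \<le> c - 1 \<and> p < q" unfolding EA_def using E1 by auto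
  have Arange: "v \<in> A \<Longrightarrow> r \<le> v \<and> v \<le> c - 1" for v
    using rt_range[OF EAr, where a=r and b=v] xc rlex unfolding A_def by auto
  have incA: "inc T1 a b \<Longrightarrow> r \<le> a \<Longrightarrow> b < c \<Longrightarrow> (a,b) \<in> (EA \<union> EA\<inverse>)\<^sup>*" for a b
  proof (induction rule: inc.induct)
    case (inc_refl a) thus ?case by simp
  next
    case (inc_step a u b)
    have "(a,u) \<in> EA" using inc_step inc_le[OF inc_step(3)] unfolding EA_def by auto
    moreover have "(u,b) \<in> (EA \<union> EA\<inverse>)\<^sup>*" using inc_step by simp
    ultimately show ?case by (meson UnI1 converse_rtrancl_into_rtrancl)
  qed
  have xA: "x \<in> A" using incA[OF rx] xc unfolding A_def by simp
  have rA: "r \<in> A" unfolding A_def by simp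
  have cA: "c \<notin> A" using Arange xc by fastforce
  have j01: "1 \<le> j0" using E1 j0 by blast
  have "r \<in> {1..n}" "c \<in> {1..n}" using j01 j0r rlex xc by auto
  from cut_lemma[OF conn1 rA cA this] obtain u w where uw: "(u,w)\<in>T1" "(u\<in>A \<and> w\<notin>A) \<or> (u\<notin>A \<and> w\<in>A)"
    by blast
  have uwl: "u < w" using E1 uw by blast
  from uw(2) show False
  proof
    assume a: "u\<in>A \<and> w\<notin>A"
    have ur: "r \<le> u" "u \<le> c - 1" using Arange a by auto
    have "c \<le> w"
    proof (rule ccontr)
      assume "\<not> c \<le> w"
      hence "(u,w) \<in> EA" using uw ur unfolding EA_def by auto
      hence "(u,w) \<in> EA \<union> EA\<inverse>" by blast
      moreover have "(r,u) \<in> (EA \<union> EA\<inverse>)\<^sup>*" using a unfolding A_def by blast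
      ultimately have "(r,w) \<in> (EA \<union> EA\<inverse>)\<^sup>*" by (meson rtrancl_into_rtrancl)
      hence "w \<in> A" unfolding A_def by blast
      thus False using a by simp
    qed
    show False
    proof (cases "w = c")
      case True
      hence uc: "(u,c) \<in> T1" using uw by simp
      show False
      proof (cases "u < x")
        case True thus False using noLr ur uc by blast
      next
        case False
        have "u \<noteq> x" using uc xc1 by blast
        hence "x < u" using False by simp
        hence uc2: "(u,c) \<in> T2" using above uc by blast
        have "EA \<subseteq> T2 - {(x,c)}" unfolding EA_def using agree by auto
        moreover have "(x,u) \<in> (EA \<union> EA\<inverse>)\<^sup>*"
        proof -
          have "(r,x) \<in> (EA \<union> EA\<inverse>)\<^sup>*" using xA unfolding A_def by simp
          hence "(x,r) \<in> (EA \<union> EA\<inverse>)\<^sup>*" by (rule rt_sym)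
          moreover have "(r,u) \<in> (EA \<union> EA\<inverse>)\<^sup>*" using a unfolding A_def by blast
          ultimately show ?thesis by (rule rtrancl_trans)
        qed
        moreover have "u \<noteq> x" using \<open>x < u\<close> by simp
        ultimately show False using cycle_lemma[OF acyc2 xc2 uc2] by blast
      qed
    next
      case False
      hence "c < w" using \<open>c \<le> w\<close> by simp
      moreover have "u < c" using ur(2) xc(2) by linarith
      ultimately show False using ncD[OF nc1 j0(1) uw(1)] j0r ur by simp
    qed
  next
    assume a: "u\<notin>A \<and> w\<in>A"
    have wr: "r \<le> w" "w \<le> c - 1" using Arange a by auto
    have ur: "u < r"
    proof (rule ccontr)
      assume "\<not> u < r"
      hence "(u,w) \<in> EA" using uw wr xc unfolding EA_def by auto
      hence "(w,u) \<in> EA \<union> EA\<inverse>" by auto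
      moreover have "(r,w) \<in> (EA \<union> EA\<inverse>)\<^sup>*" using a unfolding A_def by blast
      ultimately have "(r,u) \<in> (EA \<union> EA\<inverse>)\<^sup>*" by (meson rtrancl_into_rtrancl)
      hence "u \<in> A" unfolding A_def by blast
      thus False using a by simp
    qed
    have "w \<noteq> r" using nolr uw by blast
    hence rw: "r < w" using wr by simp
    show False
    proof (cases "w \<le> x")
      case True
      have "\<not> inc T1 w x"
      proof
        assume "inc T1 w x"
        hence "inc T1 u x" using inc_step[OF uw(1) uwl] by simp
        thus False using rmin ur by fastforce
      qed
      moreover have "w \<noteq> x" using calculation inc_refl by blast
      ultimately have wx: "w < x" using True by simp
      from inc_straddle[OF rx rw wx] \<open>\<not> inc T1 w x\<close>
      obtain a b where ab: "(a,b)\<in>T1" "a<w" "w<b" "r \<le> a" by blast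
      thus False using ncD[OF nc1 uw(1) ab(1)] ur by simp
    next
      case False
      have "w < c" using wr(2) xc(2) by linarith
      hence uw2: "(u,w) \<in> T2" using agree uw by blast
      show False using ncD[OF nc2 uw2 xc2] False ur rlex \<open>w < c\<close> by simp
    qed
  qed
qed


lemma core: assumes G: "T2 \<subseteq> G" shows "\<not> G_reduced n G T1"
proof
  assume red: "G_reduced n G T1"
  have E1: "\<And>p q. (p,q)\<in>T1 \<Longrightarrow> 1 \<le> p \<and> p < q" using treeE[OF t1] by blast
  obtain v where v: "inc T1 v x" "(v,c) \<in> T1" using step2 by blast
  have "v \<noteq> x" using v xc1 by blast
  hence vx: "v < x" using inc_le[OF v(1)] by simp
  have v1: "1 \<le> v" using E1 v(2) by blast
  obtain xs where xs: "xs \<noteq> []" "hd xs = v" "last xs = x" "sorted_wrt (<) xs"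
     "set xs \<subseteq> {v..x}" "\<forall>j. 1 \<le> j \<and> j < length xs \<longrightarrow> (xs!(j-1), xs!j) \<in> T1"
    using inc_list[OF v(1)] by blast
  have len: "2 \<le> length xs"
  proof (cases xs)
    case Nil thus ?thesis using xs by simp
  next
    case (Cons a l)
    thus ?thesis using xs vx by (cases l) auto
  qed
  define ys where "ys = xs @ [c]"
  have ncins: "noncrossing (insert (x,c) T1)" unfolding noncrossing_def
  proof (clarify)
    fix a b c' d assume h: "(a,c') \<in> insert (x,c) T1" "(b,d) \<in> insert (x,c) T1" "a<b" "b<c'" "c'<d"
    show False
    proof (cases "(a,c') = (x,c)")
      case True
      hence bd: "(b,d) \<in> T1" using h by auto
      show False using ncD[OF nc1 v(2) bd] True h vx by simp
    next
      case False
      hence ac: "(a,c') \<in> T1" using h(1) by blast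
      show False
      proof (cases "(b,d) = (x,c)")
        case True
        hence "c' < c" using h by simp
        hence "(a,c') \<in> T2" using agree ac by blast
        thus False using ncD[OF nc2 _ xc2] True h by simp
      next
        case False
        hence "(b,d) \<in> T1" using h(2) by blast
        thus False using ncD[OF nc1 ac] h by simp
      qed
    qed
  qed
  have "3 \<le> length ys" using len by (simp add: ys_def)
  moreover have "sorted_wrt (<) ys" unfolding ys_def using xs(4,5) xc
    by (auto simp: sorted_wrt_append)
  moreover have "set ys \<subseteq> {1..n}" unfolding ys_def using xs(5) v1 xc by auto
  moreover have "(hd ys, last ys) \<in> T1" unfolding ys_def using xs(1,2) v(2) by simp
  moreover have "\<forall>j. 1 \<le> j \<and> j < length ys - 1 \<longrightarrow> (ys ! (j - 1), ys ! j) \<in> T1"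
  proof (intro allI impI)
    fix j assume j: "1 \<le> j \<and> j < length ys - 1"
    hence "j < length xs" by (simp add: ys_def)
    moreover have "j - 1 < length xs" using \<open>j < length xs\<close> by simp
    ultimately show "(ys ! (j - 1), ys ! j) \<in> T1" using xs(6) j unfolding ys_def by (simp add: nth_append)
  qed
  moreover have "ys ! (length ys - 2) = x"
  proof -
    have e: "length ys - 2 = length xs - 1" "length xs - 1 < length xs" using len by (auto simp: ys_def)
    have "ys ! (length ys - 2) = xs ! (length xs - 1)" unfolding e(1) unfolding ys_def using e(2)
      by (simp only: nth_append if_True)
    also have "\<dots> = x" using xs(1,3) by (simp add: last_conv_nth)
    finally show ?thesis .
  qed
  moreover have "last ys = c" by (simp add: ys_def)
  moreover have "(x,c) \<in> G" using G xc2 by blast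
  ultimately have W: "3 \<le> length ys \<and> sorted_wrt (<) ys \<and> set ys \<subseteq> {1..n} \<and>
           (hd ys, last ys) \<in> T1 \<and>
           (\<forall>j. 1 \<le> j \<and> j < length ys - 1 \<longrightarrow> (ys ! (j - 1), ys ! j) \<in> T1) \<and>
           (ys ! (length ys - 2), last ys) \<in> G \<and>
           noncrossing (insert (ys ! (length ys - 2), last ys) T1)" using ncins by simp
  thus False using red unfolding G_reduced_def by blast
qed

end

theorem lemma3p12:
  fixes n :: nat and G T1 T2 :: "(nat \<times> nat) set"
  assumes "graph_on n G"
    and "nc_tree n T1" and "G_reduced n G T1"
    and "nc_tree n T2" and "G_reduced n G T2"
    and "T1 \<noteq> T2"
  shows "signature n T1 \<noteq> signature n T2"
proof
  assume sig: "signature n T1 = signature n T2"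
  note t1 = assms(2) and t2 = assms(4)
  have G1: "T1 \<subseteq> G" and G2: "T2 \<subseteq> G" using assms(3,5) unfolding G_reduced_def by auto
  define D where "D = {q. \<exists>p. ((p,q)\<in>T1) \<noteq> ((p,q)\<in>T2)}"
  obtain p0 q0 where "((p0,q0)\<in>T1) \<noteq> ((p0,q0)\<in>T2)" using assms(6) by auto
  hence "q0 \<in> D" unfolding D_def by blast
  define c where "c = (LEAST q. q \<in> D)"
  have cD: "c \<in> D" unfolding c_def using \<open>q0 \<in> D\<close> by (rule LeastI)
  have agree: "\<And>p q. q < c \<Longrightarrow> (p,q) \<in> T1 \<longleftrightarrow> (p,q) \<in> T2"
  proof -
    fix p q assume "q < c"
    hence "q \<notin> D" unfolding c_def by (rule not_less_Least)
    thus "(p,q) \<in> T1 \<longleftrightarrow> (p,q) \<in> T2" unfolding D_def by blast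
  qed
  define \<Delta> where "\<Delta> = {p. ((p,c)\<in>T1) \<noteq> ((p,c)\<in>T2)}"
  have Dne: "\<Delta> \<noteq> {}" using cD unfolding D_def \<Delta>_def by blast
  have Dsub: "\<Delta> \<subseteq> {..<c}" unfolding \<Delta>_def using treeE[OF t1] treeE[OF t2] by fastforce
  hence Dfin: "finite \<Delta>" by (rule finite_subset) simp
  define x where "x = Max \<Delta>"
  have xD: "x \<in> \<Delta>" unfolding x_def using Dfin Dne by (rule Max_in)
  have above: "\<And>y. x < y \<Longrightarrow> (y,c) \<in> T1 \<longleftrightarrow> (y,c) \<in> T2"
  proof -
    fix y assume "x < y"
    hence "y \<notin> \<Delta>" unfolding x_def using Dfin by (meson Max_ge leD)
    thus "(y,c) \<in> T1 \<longleftrightarrow> (y,c) \<in> T2" unfolding \<Delta>_def by blast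
  qed
  have cn: "1 \<le> c \<and> c \<le> n" using xD treeE[OF t1, of x c] treeE[OF t2, of x c] unfolding \<Delta>_def by auto
  have sigeq: "sig_list T1 c ! (c-1) = sig_list T2 c ! (c-1)"
    using sig sig_nth[of c n T1] sig_nth[of c n T2] cn unfolding signature_def by simp
  show False
  proof (cases "(x,c) \<in> T2")
    case True
    hence "(x,c) \<notin> T1" using xD unfolding \<Delta>_def by blast
    from core[OF t1 t2 agree True this above sigeq G2] assms(3) show False by blast
  next
    case False
    hence xc1: "(x,c) \<in> T1" using xD unfolding \<Delta>_def by blast
    have agree': "\<And>p q. q < c \<Longrightarrow> (p,q) \<in> T2 \<longleftrightarrow> (p,q) \<in> T1" using agree by blast
    have above': "\<And>y. x < y \<Longrightarrow> (y,c) \<in> T2 \<longleftrightarrow> (y,c) \<in> T1" using above by blast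
    from core[OF t2 t1 agree' xc1 False above' sigeq[symmetric] G1] assms(5) show False by blast
  qed
qed

end
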